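(* Let $\gamma_{ab}(q)$ be a metric and $E_0\neq0$ a fixed constant, and consider the geodesic equations $\ddot q^a+\Gamma^a_{bc}\dot q^b\dot q^c=0$ subject to $\gamma_{ab}\dot q^a\dot q^b=2E_0$. Then each of the following is a first integral of this constrained system: Integral 1. For $\ell\ge0$, $$I_{(\ell)1}=\Big(-\sum_{k=1}^{\ell}\frac{t^{2k}}{2k}L_{(2k-1)(a;b)}+C_{(0)ab}\Big)\dot q^a\dot q^b+\sum_{k=1}^{\ell}t^{2k-1}L_{(2k-1)a}\dot q^a+G(q),$$ where (if $\ell\ge1$) $L_{(2\ell-1)(a;b)}$ is a Killing tensor, $C_{(0)ab}$ is a second order CKT with associated vector $X_{(0)a}$, for $k=1,\dots,\ell-1$ each $L_{(2k-1)(a;b)}$ is a second order CKT with associated vector $Y_{(2k-1)a}=\frac{k(2k+1)}{E_0}L_{(2k+1)a}$, and $G_{,a}=-2E_0X_{(0)a}-L_{(1)a}$, the term $L_{(1)a}$ being present only if $\ell>0$. Integral 2. For $\ell\ge0$, $$I_{(\ell)2}=\sum_{k=0}^{\ell}\Big(-\frac{t^{2k+1}}{2k+1}L_{(2k)(a;b)}\dot q^a\dot q^b+t^{2k}L_{(2k)a}\dot q^a\Big),$$ where $L_{(2\ell)(a;b)}$ is a Killing tensor and, for $k=0,\dots,\ell-1$, $L_{(2k)(a;b)}$ is a second order CKT with associated vector $Y_{(2k)a}=\frac{(k+1)(2k+1)}{E_0}L_{(2k+2)a}$. Integral 3. For a constant $\lambda\ne0$, $$I_{(e)}=e^{\lambda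 t}\big(-L_{(a;b)}\dot q^a\dot q^b+\lambda L_a\dot q^a\big),$$ where $L_{(a;b)}$ is a second order CKT with associated vector $Y_a=\frac{\lambda^2}{2E_0}L_a$.
   Context: $\Gamma^a_{bc}$ are the Levi-Civita connection coefficients of $\gamma_{ab}$; comma = partial derivative, semicolon = covariant derivative, dot = $d/dt$; round brackets denote symmetrization with weight $1/N!$. A first integral of the constrained system is a function $I(t,q,\dot q)$ with $dI/dt=0$ along every geodesic with $\gamma_{ab}\dot q^a\dot q^b=2E_0$. A symmetric tensor $U_{ab}$ is a second order conformal Killing tensor (CKT) with associated vector $u_a$ if $U_{(ab;c)}=u_{(a}\gamma_{bc)}$; it is a Killing tensor if $u_a=0$. *)

theory Defs
  imports "HOL-Analysis.Analysis"
begin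

definition partial :: "(real^'n \<Rightarrow> real) \<Rightarrow> 'n \<Rightarrow> real^'n \<Rightarrow> real" where
  "partial f c q = deriv (\<lambda>s. f (q + s *\<^sub>R axis c 1)) 0"

fun iter_partial :: "'n list \<Rightarrow> (real^'n \<Rightarrow> real) \<Rightarrow> real^'n \<Rightarrow> real" where
  "iter_partial [] f = f"
| "iter_partial (c # cs) f = partial (iter_partial cs f) c"

definition smooth_fun :: "(real^'n) set \<Rightarrow> (real^'n \<Rightarrow> real) \<Rightarrow> bool" where
  "smooth_fun U f \<longleftrightarrow> (\<forall>cs. \<forall>q\<in>U. iter_partial cs f differentiable (at q))"

definition metric_on :: "(real^'n) set \<Rightarrow> (real^'n \<Rightarrow> 'n \<Rightarrow> 'n \<Rightarrow> real) \<Rightarrow> bool" where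
  "metric_on U g \<longleftrightarrow> open U \<and> (\<forall>a b. smooth_fun U (\<lambda>q. g q a b)) \<and>
     (\<forall>q\<in>U. \<forall>a b. g q a b = g q b a) \<and>
     (\<forall>q\<in>U. invertible (\<chi> a b. g q a b))"

definition inv_metric :: "(real^'n \<Rightarrow> 'n \<Rightarrow> 'n \<Rightarrow> real) \<Rightarrow> real^'n \<Rightarrow> 'n \<Rightarrow> 'n \<Rightarrow> real" where
  "inv_metric g q a b = matrix_inv (\<chi> i j. g q i j) $ a $ b"

definition christoffel :: "(real^'n \<Rightarrow> 'n \<Rightarrow> 'n \<Rightarrow> real) \<Rightarrow> real^'n \<Rightarrow> 'n \<Rightarrow> 'n \<Rightarrow> 'n \<Rightarrow> real" where
  "christoffel g q a b c = (\<Sum>d\<in>UNIV. inv_metric g q a d *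
     (partial (\<lambda>x. g x d b) c q + partial (\<lambda>x. g x d c) b q - partial (\<lambda>x. g x b c) d q) / 2)"

definition cov1 :: "(real^'n \<Rightarrow> 'n \<Rightarrow> 'n \<Rightarrow> real) \<Rightarrow> (real^'n \<Rightarrow> 'n \<Rightarrow> real) \<Rightarrow> real^'n \<Rightarrow> 'n \<Rightarrow> 'n \<Rightarrow> real" where
  "cov1 g L q a b = partial (\<lambda>x. L x a) b q - (\<Sum>c\<in>UNIV. christoffel g q c a b * L q c)"

definition symcov :: "(real^'n \<Rightarrow> 'n \<Rightarrow> 'n \<Rightarrow> real) \<Rightarrow> (real^'n \<Rightarrow> 'n \<Rightarrow> real) \<Rightarrow> real^'n \<Rightarrow> 'n \<Rightarrow> 'n \<Rightarrow> real" where
  "symcov g L q a b = (cov1 g L q a b + cov1 g L q b a) / 2"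

definition cov2 :: "(real^'n \<Rightarrow> 'n \<Rightarrow> 'n \<Rightarrow> real) \<Rightarrow> (real^'n \<Rightarrow> 'n \<Rightarrow> 'n \<Rightarrow> real) \<Rightarrow> real^'n \<Rightarrow> 'n \<Rightarrow> 'n \<Rightarrow> 'n \<Rightarrow> real" where
  "cov2 g T q a b c = partial (\<lambda>x. T x a b) c q
     - (\<Sum>d\<in>UNIV. christoffel g q d c a * T q d b)
     - (\<Sum>d\<in>UNIV. christoffel g q d c b * T q a d)"

definition is_CKT :: "(real^'n) set \<Rightarrow> (real^'n \<Rightarrow> 'n \<Rightarrow> 'n \<Rightarrow> real) \<Rightarrow> (real^'n \<Rightarrow> 'n \<Rightarrow> 'n \<Rightarrow> real)
     \<Rightarrow> (real^'n \<Rightarrow> 'n \<Rightarrow> real) \<Rightarrow> bool" where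
  "is_CKT U g T u \<longleftrightarrow> (\<forall>q\<in>U. \<forall>a b. T q a b = T q b a) \<and>
     (\<forall>q\<in>U. \<forall>a b c.
        (cov2 g T q a b c + cov2 g T q b c a + cov2 g T q c a b
         + cov2 g T q b a c + cov2 g T q a c b + cov2 g T q c b a) / 6
      = (u q a * g q b c + u q b * g q c a + u q c * g q a b
         + u q b * g q a c + u q a * g q c b + u q c * g q b a) / 6)"

definition is_KT :: "(real^'n) set \<Rightarrow> (real^'n \<Rightarrow> 'n \<Rightarrow> 'n \<Rightarrow> real) \<Rightarrow> (real^'n \<Rightarrow> 'n \<Rightarrow> 'n \<Rightarrow> real) \<Rightarrow> bool" where
  "is_KT U g T \<longleftrightarrow> is_CKT U g T (\<lambda>q a. 0)"

definition constrained_geodesic :: "(real^'n) set \<Rightarrow> (real^'n \<Rightarrow> 'n \<Rightarrow> 'n \<Rightarrow> real) \<Rightarrow> real \<Rightarrow> real set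
     \<Rightarrow> (real \<Rightarrow> real^'n) \<Rightarrow> (real \<Rightarrow> real^'n) \<Rightarrow> (real \<Rightarrow> real^'n) \<Rightarrow> bool" where
  "constrained_geodesic U g E0 T q qd qdd \<longleftrightarrow>
     (\<forall>t\<in>T. q t \<in> U \<and> (q has_vector_derivative qd t) (at t) \<and>
        (qd has_vector_derivative qdd t) (at t) \<and>
        (\<forall>a. qdd t $ a + (\<Sum>b\<in>UNIV. \<Sum>c\<in>UNIV. christoffel g (q t) a b c * qd t $ b * qd t $ c) = 0) \<and>
        (\<Sum>a\<in>UNIV. \<Sum>b\<in>UNIV. g (q t) a b * qd t $ a * qd t $ b) = 2 * E0)"

definition first_integral :: "(real^'n) set \<Rightarrow> (real^'n \<Rightarrow> 'n \<Rightarrow> 'n \<Rightarrow> real) \<Rightarrow> real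
     \<Rightarrow> (real \<Rightarrow> real^'n \<Rightarrow> real^'n \<Rightarrow> real) \<Rightarrow> bool" where
  "first_integral U g E0 I \<longleftrightarrow>
     (\<forall>T q qd qdd. open T \<and> is_interval T \<and> constrained_geodesic U g E0 T q qd qdd \<longrightarrow>
        (\<forall>t\<in>T. ((\<lambda>s. I s (q s) (qd s)) has_real_derivative 0) (at t)))"

end

theory Submission
  imports Defs
begin


lemma partial_eq:
  assumes "(f has_derivative f') (at q)"
  shows "partial f c q = f' (axis c 1)"
proof -
  have l: "linear f'" using assms has_derivative_linear by blast
  have h1: "((\<lambda>s. q + s *\<^sub>R axis c 1) has_derivative (\<lambda>s. s *\<^sub>R axis c 1)) (at 0)"
    by (auto intro!: derivative_eq_intros)
  have h2: "(f has_derivative f') (at (q + 0 *\<^sub>R axis c (1::real)))" using assms by simp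
  have "((\<lambda>s. f (q + s *\<^sub>R axis c 1)) has_derivative (\<lambda>s. f' (s *\<^sub>R axis c 1))) (at 0)"
    using has_derivative_compose[OF h1 h2] by (simp add: o_def)
  moreover have "(\<lambda>s. f' (s *\<^sub>R axis c 1)) = (\<lambda>s. f' (axis c 1) * s)"
    using l by (auto simp: linear_scale mult.commute)
  ultimately have "((\<lambda>s. f (q + s *\<^sub>R axis c 1)) has_real_derivative f' (axis c 1)) (at 0)"
    by (simp add: has_field_derivative_def)
  then show ?thesis unfolding partial_def by (rule DERIV_imp_deriv)
qed

lemma lin_expand:
  fixes f' :: "real^'n \<Rightarrow> real"
  assumes "linear f'"
  shows "f' v = (\<Sum>c\<in>UNIV. f' (axis c 1) * v $ c)"
proof -
  have "f' v = f' (\<Sum>i\<in>UNIV. (v$i) *\<^sub>R axis i 1)"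
    using basis_expansion[of v] by (simp add: scalar_mult_eq_scaleR)
  also have "\<dots> = (\<Sum>i\<in>UNIV. (v$i) * f' (axis i 1))"
    using assms by (simp add: linear_sum linear_scale)
  finally show ?thesis by (simp add: mult.commute)
qed

lemma chain_partial:
  fixes f :: "real^'n \<Rightarrow> real"
  assumes "f differentiable (at (q t))" "(q has_vector_derivative v) (at t)"
  shows "((\<lambda>s. f (q s)) has_real_derivative (\<Sum>c\<in>UNIV. partial f c (q t) * v $ c)) (at t)"
proof -
  obtain f' where f': "(f has_derivative f') (at (q t))" using assms(1) differentiable_def by blast
  have l: "linear f'" using f' has_derivative_linear by blast
  have qd: "(q has_derivative (\<lambda>h. h *\<^sub>R v)) (at t)" using assms(2) has_vector_derivative_def by blast
  have "((\<lambda>s. f (q s)) has_derivative (\<lambda>h. f' (h *\<^sub>R v))) (at t)"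
    using has_derivative_compose[OF qd f'] by (simp add: o_def)
  moreover have "(\<lambda>h. f' (h *\<^sub>R v)) = (\<lambda>h. f' v * h)" using l by (auto simp: linear_scale mult.commute)
  moreover have "f' v = (\<Sum>c\<in>UNIV. partial f c (q t) * v $ c)"
  proof -
    have "f' v = (\<Sum>c\<in>UNIV. f' (axis c 1) * v $ c)" by (rule lin_expand[OF l])
    also have "\<dots> = (\<Sum>c\<in>UNIV. partial f c (q t) * v $ c)" by (simp add: partial_eq[OF f'])
    finally show ?thesis .
  qed
  ultimately have "((\<lambda>s. f (q s)) has_derivative (\<lambda>h. (\<Sum>c\<in>UNIV. partial f c (q t) * v $ c) * h)) (at t)"
    by metis
  then show ?thesis unfolding has_field_derivative_def by (simp only: )
qed

lemma comp_deriv: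
  assumes "(qd has_vector_derivative w) (at t)"
  shows "((\<lambda>s. qd s $ a) has_real_derivative w $ a) (at t)"
  using bounded_linear.has_vector_derivative[OF bounded_linear_vec_nth assms, of a]
  by (simp add: has_real_derivative_iff_has_vector_derivative)

lemma differentiable_prod_at:
  fixes f :: "'i \<Rightarrow> real^'n \<Rightarrow> real"
  shows "(\<And>i. i \<in> I \<Longrightarrow> f i differentiable (at x)) \<Longrightarrow> (\<lambda>x. \<Prod>i\<in>I. f i x) differentiable (at x)"
proof (induct I rule: infinite_finite_induct)
  case (insert i I) then show ?case by (simp add: differentiable_mult)
qed auto

lemma det_differentiable:
  fixes F :: "real^'n \<Rightarrow> 'm::finite \<Rightarrow> 'm \<Rightarrow> real"
  assumes "\<And>i j. (\<lambda>x. F x i j) differentiable (at q)"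
  shows "(\<lambda>x. det (\<chi> i j. F x i j)) differentiable (at q)"
  unfolding det_def
  apply (rule differentiable_sum)
   apply (simp add: finite_permutations)
  apply (intro ballI differentiable_mult differentiable_const differentiable_prod_at)
  using assms by simp


lemma sw2: "(\<Sum>a\<in>A. \<Sum>b\<in>B. \<Sum>c\<in>C. f a b c) = (\<Sum>a\<in>A. \<Sum>c\<in>C. \<Sum>b\<in>B. f a b c)"
  by (rule sum.cong[OF refl], rule sum.swap)
lemma sw3: "(\<Sum>a\<in>A. \<Sum>b\<in>B. \<Sum>c\<in>C. \<Sum>d\<in>D. f a b c d) = (\<Sum>a\<in>A. \<Sum>b\<in>B. \<Sum>d\<in>D. \<Sum>c\<in>C. f a b c d)"
  by (rule sum.cong[OF refl], rule sum.cong[OF refl], rule sum.swap)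

lemma alg_B:
  fixes T :: "'n::finite \<Rightarrow> 'n \<Rightarrow> real" and G :: "'n \<Rightarrow> 'n \<Rightarrow> 'n \<Rightarrow> real" and v w :: "'n \<Rightarrow> real"
  assumes "\<And>a. w a = - (\<Sum>b\<in>UNIV. \<Sum>c\<in>UNIV. G a b c * v b * v c)"
  shows "(\<Sum>a\<in>UNIV. \<Sum>b\<in>UNIV. T a b * w a * v b)
     = - (\<Sum>a\<in>UNIV. \<Sum>b\<in>UNIV. \<Sum>c\<in>UNIV. (\<Sum>d\<in>UNIV. G d c a * T d b) * v a * v b * v c)"
proof -
  let ?H = "\<lambda>a b x c. G a x c * T a b * v x * v c * v b"
  have "(\<Sum>a\<in>UNIV. \<Sum>b\<in>UNIV. T a b * w a * v b) = - (\<Sum>a\<in>UNIV. \<Sum>b\<in>UNIV. \<Sum>x\<in>UNIV. \<Sum>c\<in>UNIV. ?H a b x c)"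
    by (simp add: assms sum_distrib_left sum_distrib_right sum_negf mult_ac)
  also have "(\<Sum>a\<in>UNIV. \<Sum>b\<in>UNIV. \<Sum>x\<in>UNIV. \<Sum>c\<in>UNIV. ?H a b x c) = (\<Sum>a\<in>UNIV. \<Sum>b\<in>UNIV. \<Sum>c\<in>UNIV. \<Sum>x\<in>UNIV. ?H a b x c)"
    by (rule sw3)
  also have "\<dots> = (\<Sum>a\<in>UNIV. \<Sum>c\<in>UNIV. \<Sum>b\<in>UNIV. \<Sum>x\<in>UNIV. ?H a b x c)"
    by (rule sw2)
  also have "\<dots> = (\<Sum>c\<in>UNIV. \<Sum>a\<in>UNIV. \<Sum>b\<in>UNIV. \<Sum>x\<in>UNIV. ?H a b x c)"
    by (rule sum.swap)
  also have "\<dots> = (\<Sum>c\<in>UNIV. \<Sum>b\<in>UNIV. \<Sum>a\<in>UNIV. \<Sum>x\<in>UNIV. ?H a b x c)"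
    by (rule sw2)
  also have "\<dots> = (\<Sum>c\<in>UNIV. \<Sum>b\<in>UNIV. \<Sum>x\<in>UNIV. \<Sum>a\<in>UNIV. ?H a b x c)"
    by (rule sw3)
  also have "\<dots> = (\<Sum>a\<in>UNIV. \<Sum>b\<in>UNIV. \<Sum>c\<in>UNIV. (\<Sum>d\<in>UNIV. G d c a * T d b) * v a * v b * v c)"
    by (simp add: sum_distrib_left sum_distrib_right mult_ac)
  finally show ?thesis .
qed

lemma alg_C:
  fixes T :: "'n::finite \<Rightarrow> 'n \<Rightarrow> real" and G :: "'n \<Rightarrow> 'n \<Rightarrow> 'n \<Rightarrow> real" and v w :: "'n \<Rightarrow> real"
  assumes "\<And>a. w a = - (\<Sum>b\<in>UNIV. \<Sum>c\<in>UNIV. G a b c * v b * v c)"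
  shows "(\<Sum>a\<in>UNIV. \<Sum>b\<in>UNIV. T a b * v a * w b)
     = - (\<Sum>a\<in>UNIV. \<Sum>b\<in>UNIV. \<Sum>c\<in>UNIV. (\<Sum>d\<in>UNIV. G d c b * T a d) * v a * v b * v c)"
proof -
  have "(\<Sum>a\<in>UNIV. \<Sum>b\<in>UNIV. T a b * v a * w b) = (\<Sum>b\<in>UNIV. \<Sum>a\<in>UNIV. T a b * w b * v a)"
    by (subst sum.swap) (simp add: mult_ac)
  also have "\<dots> = - (\<Sum>a\<in>UNIV. \<Sum>b\<in>UNIV. \<Sum>c\<in>UNIV. (\<Sum>d\<in>UNIV. G d c a * T b d) * v a * v b * v c)"
    using alg_B[of w G v "\<lambda>a b. T b a", OF assms] by simp
  also have "(\<Sum>a\<in>UNIV. \<Sum>b\<in>UNIV. \<Sum>c\<in>UNIV. (\<Sum>d\<in>UNIV. G d c a * T b d) * v a * v b * v c)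
      = (\<Sum>b\<in>UNIV. \<Sum>a\<in>UNIV. \<Sum>c\<in>UNIV. (\<Sum>d\<in>UNIV. G d c a * T b d) * v a * v b * v c)"
    by (rule sum.swap)
  also have "\<dots> = (\<Sum>a\<in>UNIV. \<Sum>b\<in>UNIV. \<Sum>c\<in>UNIV. (\<Sum>d\<in>UNIV. G d c b * T a d) * v a * v b * v c)"
    by (simp add: mult_ac)
  finally show ?thesis .
qed

lemma alg_L:
  fixes L :: "'n::finite \<Rightarrow> real" and G :: "'n \<Rightarrow> 'n \<Rightarrow> 'n \<Rightarrow> real" and v w :: "'n \<Rightarrow> real"
  assumes "\<And>a. w a = - (\<Sum>b\<in>UNIV. \<Sum>c\<in>UNIV. G a b c * v b * v c)"
  shows "(\<Sum>a\<in>UNIV. L a * w a) = - (\<Sum>a\<in>UNIV. \<Sum>b\<in>UNIV. (\<Sum>c\<in>UNIV. G c a b * L c) * v a * v b)"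
proof -
  have "(\<Sum>a\<in>UNIV. L a * w a) = - (\<Sum>c\<in>UNIV. \<Sum>a\<in>UNIV. \<Sum>b\<in>UNIV. G c a b * L c * v a * v b)"
    by (simp add: assms sum_distrib_left sum_negf mult_ac)
  also have "(\<Sum>c\<in>UNIV. \<Sum>a\<in>UNIV. \<Sum>b\<in>UNIV. G c a b * L c * v a * v b) = (\<Sum>a\<in>UNIV. \<Sum>c\<in>UNIV. \<Sum>b\<in>UNIV. G c a b * L c * v a * v b)"
    by (rule sum.swap)
  also have "\<dots> = (\<Sum>a\<in>UNIV. \<Sum>b\<in>UNIV. \<Sum>c\<in>UNIV. G c a b * L c * v a * v b)"
    by (rule sw2)
  also have "\<dots> = (\<Sum>a\<in>UNIV. \<Sum>b\<in>UNIV. (\<Sum>c\<in>UNIV. G c a b * L c) * v a * v b)"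
    by (simp add: sum_distrib_right)
  finally show ?thesis .
qed


lemma matrix_inv_entry:
  fixes A :: "real^'n^'n"
  assumes "invertible A"
  shows "matrix_inv A $ a $ b = det (\<chi> i j. if j = a then axis b 1 $ i else A$i$j) / det A"
proof -
  let ?M = "matrix_inv A"
  have AM: "A ** ?M = mat 1"
    using assms unfolding invertible_def matrix_inv_def by (rule someI_ex[THEN conjunct1])
  let ?x = "\<chi> k. ?M $ k $ b"
  have "A *v ?x = axis b 1"
  proof -
    have "(A ** ?M) $ i $ b = (A *v ?x) $ i" for i
      by (simp add: matrix_matrix_mult_def matrix_vector_mult_def)
    then show ?thesis using AM by (auto simp: vec_eq_iff mat_def axis_def)
  qed
  moreover have "det A \<noteq> 0" using assms invertible_det_nz by blast
  ultimately have "?x = (\<chi> k. det(\<chi> i j. if j=k then axis b 1 $i else A$i$j) / det A)"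
    using cramer by blast
  then have "?x $ a = det(\<chi> i j. if j=a then axis b 1 $i else A$i$j) / det A" by simp
  then show ?thesis by simp
qed

lemma smooth_diff: "smooth_fun U f \<Longrightarrow> q \<in> U \<Longrightarrow> f differentiable (at q)"
  unfolding smooth_fun_def using iter_partial.simps(1) by metis

lemma smooth_partial_diff: "smooth_fun U f \<Longrightarrow> q \<in> U \<Longrightarrow> (partial f c) differentiable (at q)"
  unfolding smooth_fun_def using iter_partial.simps by metis

lemma inv_metric_diff:
  assumes m: "metric_on U g" and q: "q \<in> U"
  shows "(\<lambda>x. inv_metric g x a b) differentiable (at q)"
proof -
  let ?F = "\<lambda>x. det (\<chi> i j. if j = a then axis b 1 $ i else g x i j) / det (\<chi> i j. g x i j)"
  have gd: "\<And>i j. (\<lambda>x. g x i j) differentiable (at q)"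
    using m q smooth_diff unfolding metric_on_def by blast
  have "det (\<chi> i j. g q i j) \<noteq> 0" using m q invertible_det_nz unfolding metric_on_def by blast
  moreover have "(\<lambda>x. det (\<chi> i j. g x i j)) differentiable (at q)"
    by (rule det_differentiable) (rule gd)
  moreover have "(\<lambda>x. det (\<chi> i j. if j = a then axis b 1 $ i else g x i j)) differentiable (at q)"
    apply (rule det_differentiable)
    subgoal for i j by (cases "j = a") (simp_all add: gd)
    done
  ultimately have "?F differentiable (at q)" by (intro differentiable_divide)
  then obtain F' where F': "(?F has_derivative F') (at q)" unfolding differentiable_def by blast
  have oU: "open U" using m metric_on_def by blast
  have eqF: "\<And>x. x \<in> U \<Longrightarrow> ?F x = inv_metric g x a b"
  proof -
    fix x assume x: "x \<in> U"
    then have "invertible (\<chi> i j. g x i j)" using m unfolding metric_on_def by blast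
    from matrix_inv_entry[OF this, of a b] show "?F x = inv_metric g x a b"
      unfolding inv_metric_def by (simp cong: if_cong)
  qed
  have "((\<lambda>x. inv_metric g x a b) has_derivative F') (at q)"
    by (rule has_derivative_transform_within_open[OF F' oU q eqF])
  then show ?thesis unfolding differentiable_def by blast
qed

lemma christoffel_diff:
  assumes m: "metric_on U g" and q: "q \<in> U"
  shows "(\<lambda>x. christoffel g x a b c) differentiable (at q)"
proof -
  have pd: "\<And>i j k. (partial (\<lambda>x. g x i j) k) differentiable (at q)"
    using m q smooth_partial_diff unfolding metric_on_def by blast
  show ?thesis unfolding christoffel_def
    apply (rule differentiable_sum, simp)
    apply (intro ballI differentiable_divide differentiable_mult differentiable_add differentiable_diff
        inv_metric_diff[OF m q] pd differentiable_const)
    by simp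
qed

lemma cov1_diff:
  assumes m: "metric_on U g" and q: "q \<in> U" and L: "\<forall>a. smooth_fun U (\<lambda>q. L q a)"
  shows "(\<lambda>x. cov1 g L x a b) differentiable (at q)"
proof -
  have "\<And>c. (\<lambda>x. L x c) differentiable (at q)" using L q smooth_diff by blast
  moreover have "partial (\<lambda>x. L x a) b differentiable (at q)" using L q smooth_partial_diff by blast
  ultimately show ?thesis unfolding cov1_def
    by (intro differentiable_diff differentiable_sum ballI differentiable_mult christoffel_diff[OF m q]) auto
qed

lemma symcov_diff:
  assumes m: "metric_on U g" and q: "q \<in> U" and L: "\<forall>a. smooth_fun U (\<lambda>q. L q a)"
  shows "(\<lambda>x. symcov g L x a b) differentiable (at q)"
  unfolding symcov_def
  by (intro differentiable_divide differentiable_add cov1_diff[OF m q L] differentiable_const) simp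


lemma symcov_contract:
  "(\<Sum>a\<in>UNIV. \<Sum>b\<in>UNIV. symcov g L q a b * v a * v b) = (\<Sum>a\<in>UNIV. \<Sum>b\<in>UNIV. cov1 g L q a b * v a * v b)"
proof -
  have s: "(\<Sum>a\<in>UNIV. \<Sum>b\<in>UNIV. cov1 g L q b a * v a * v b) = (\<Sum>a\<in>UNIV. \<Sum>b\<in>UNIV. cov1 g L q a b * v a * v b)"
    by (subst sum.swap) (simp add: mult_ac)
  have "(\<Sum>a\<in>UNIV. \<Sum>b\<in>UNIV. symcov g L q a b * v a * v b)
      = (\<Sum>a\<in>UNIV. \<Sum>b\<in>UNIV. (cov1 g L q a b * v a * v b + cov1 g L q b a * v a * v b) / 2)"
    unfolding symcov_def by (intro sum.cong refl) (simp add: algebra_simps add_divide_distrib)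
  also have "\<dots> = ((\<Sum>a\<in>UNIV. \<Sum>b\<in>UNIV. cov1 g L q a b * v a * v b) + (\<Sum>a\<in>UNIV. \<Sum>b\<in>UNIV. cov1 g L q b a * v a * v b)) / 2"
    by (simp only: add_divide_distrib sum_divide_distrib sum.distrib)
  finally show ?thesis using s by simp
qed


definition S3 :: "('n::finite \<Rightarrow> 'n \<Rightarrow> 'n \<Rightarrow> real) \<Rightarrow> ('n \<Rightarrow> real) \<Rightarrow> real" where
  "S3 f v = (\<Sum>a\<in>UNIV. \<Sum>b\<in>UNIV. \<Sum>c\<in>UNIV. f a b c * v a * v b * v c)"

lemma S3_p3: "S3 (\<lambda>a b c. f b a c) v = S3 f v"
  unfolding S3_def by (subst sum.swap) (simp add: mult_ac)
lemma S3_p4: "S3 (\<lambda>a b c. f a c b) v = S3 f v"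
  unfolding S3_def by (subst sw2) (simp add: mult_ac)
lemma S3_p1: "S3 (\<lambda>a b c. f b c a) v = S3 f v"
  using S3_p3[of "\<lambda>x y z. f x z y" v] S3_p4[of f v] by simp
lemma S3_p2: "S3 (\<lambda>a b c. f c a b) v = S3 f v"
  using S3_p4[of "\<lambda>x y z. f y x z" v] S3_p3[of f v] by simp
lemma S3_p5: "S3 (\<lambda>a b c. f c b a) v = S3 f v"
  using S3_p3[of "\<lambda>x y z. f z x y" v] S3_p2[of f v] by simp

lemma S3_add: "S3 (\<lambda>a b c. f a b c + h a b c) v = S3 f v + S3 h v"
  unfolding S3_def by (simp add: distrib_right sum.distrib)
lemma S3_div: "S3 (\<lambda>a b c. f a b c / 6) v = S3 f v / 6"
  unfolding S3_def by (simp add: sum_divide_distrib)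

lemma ckt_contract:
  fixes K :: "'n::finite \<Rightarrow> 'n \<Rightarrow> 'n \<Rightarrow> real" and gg :: "'n \<Rightarrow> 'n \<Rightarrow> real"
  assumes eq: "\<forall>a b c. (K a b c + K b c a + K c a b + K b a c + K a c b + K c b a) / 6
      = (u a * gg b c + u b * gg c a + u c * gg a b + u b * gg a c + u a * gg c b + u c * gg b a) / 6"
    and en: "(\<Sum>a\<in>UNIV. \<Sum>b\<in>UNIV. gg a b * v a * v b) = 2 * E0"
  shows "S3 K v = 2 * E0 * (\<Sum>a\<in>UNIV. u a * v a)"
proof -
  let ?P = "\<lambda>a b c. u a * gg b c"
  have "S3 (\<lambda>a b c. (K a b c + K b c a + K c a b + K b a c + K a c b + K c b a) / 6) v
      = S3 (\<lambda>a b c. (?P a b c + ?P b c a + ?P c a b + ?P b a c + ?P a c b + ?P c b a) / 6) v"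
    by (simp only: eq)
  then have "(S3 K v + S3 (\<lambda>a b c. K b c a) v + S3 (\<lambda>a b c. K c a b) v + S3 (\<lambda>a b c. K b a c) v
        + S3 (\<lambda>a b c. K a c b) v + S3 (\<lambda>a b c. K c b a) v) / 6
      = (S3 ?P v + S3 (\<lambda>a b c. ?P b c a) v + S3 (\<lambda>a b c. ?P c a b) v + S3 (\<lambda>a b c. ?P b a c) v
        + S3 (\<lambda>a b c. ?P a c b) v + S3 (\<lambda>a b c. ?P c b a) v) / 6"
    by (simp only: S3_div S3_add)
  then have "S3 K v = S3 ?P v"
    by (simp only: S3_p1[of K v] S3_p2[of K v] S3_p3[of K v] S3_p4[of K v] S3_p5[of K v]
        S3_p1[of ?P v] S3_p2[of ?P v] S3_p3[of ?P v] S3_p4[of ?P v] S3_p5[of ?P v]) simp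
  also have "S3 ?P v = (\<Sum>a\<in>UNIV. u a * v a * (\<Sum>b\<in>UNIV. \<Sum>c\<in>UNIV. gg b c * v b * v c))"
    unfolding S3_def sum_distrib_left by (intro sum.cong refl) (simp only: mult_ac)
  also have "\<dots> = (\<Sum>a\<in>UNIV. u a * v a) * (\<Sum>b\<in>UNIV. \<Sum>c\<in>UNIV. gg b c * v b * v c)"
    by (simp add: sum_distrib_right)
  finally have X: "S3 K v = (\<Sum>a\<in>UNIV. u a * v a) * (\<Sum>b\<in>UNIV. \<Sum>c\<in>UNIV. gg b c * v b * v c)" .
  show ?thesis unfolding X en by (rule mult.commute)
qed


lemma S3_diff: "S3 (\<lambda>a b c. f a b c - h a b c) v = S3 f v - S3 h v"
  unfolding S3_def by (simp add: left_diff_distrib sum_subtractf)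

lemma quad_alg:
  fixes T :: "'n::finite \<Rightarrow> 'n \<Rightarrow> real" and dT G :: "'n \<Rightarrow> 'n \<Rightarrow> 'n \<Rightarrow> real" and v w :: "'n \<Rightarrow> real"
  assumes w: "\<And>a. w a = - (\<Sum>b\<in>UNIV. \<Sum>c\<in>UNIV. G a b c * v b * v c)"
  shows "(\<Sum>a\<in>UNIV. \<Sum>b\<in>UNIV. (T a b * v a) * w b + (T a b * w a + (\<Sum>c\<in>UNIV. dT a b c * v c) * v a) * v b)
     = S3 (\<lambda>a b c. dT a b c - (\<Sum>d\<in>UNIV. G d c a * T d b) - (\<Sum>d\<in>UNIV. G d c b * T a d)) v"
proof -
  have "(\<Sum>a\<in>UNIV. \<Sum>b\<in>UNIV. (T a b * v a) * w b + (T a b * w a + (\<Sum>c\<in>UNIV. dT a b c * v c) * v a) * v b)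
     = (\<Sum>a\<in>UNIV. \<Sum>b\<in>UNIV. T a b * v a * w b) + (\<Sum>a\<in>UNIV. \<Sum>b\<in>UNIV. T a b * w a * v b)
       + (\<Sum>a\<in>UNIV. \<Sum>b\<in>UNIV. (\<Sum>c\<in>UNIV. dT a b c * v c) * v a * v b)"
    by (simp only: sum.distrib[symmetric] distrib_right) (simp only: add.assoc)
  also have "(\<Sum>a\<in>UNIV. \<Sum>b\<in>UNIV. (\<Sum>c\<in>UNIV. dT a b c * v c) * v a * v b) = S3 dT v"
    unfolding S3_def sum_distrib_right by (intro sum.cong refl) (simp only: mult_ac)
  also note alg_B[OF w, of T]
  also note alg_C[OF w, of T]
  also have "S3 (\<lambda>a b c. dT a b c - (\<Sum>d\<in>UNIV. G d c a * T d b) - (\<Sum>d\<in>UNIV. G d c b * T a d)) v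
     = S3 dT v - S3 (\<lambda>a b c. \<Sum>d\<in>UNIV. G d c a * T d b) v - S3 (\<lambda>a b c. \<Sum>d\<in>UNIV. G d c b * T a d) v"
    by (simp only: S3_diff)
  ultimately show ?thesis unfolding S3_def by simp
qed

lemma lin_alg:
  fixes L :: "'n::finite \<Rightarrow> real" and dL :: "'n \<Rightarrow> 'n \<Rightarrow> real" and G :: "'n \<Rightarrow> 'n \<Rightarrow> 'n \<Rightarrow> real" and v w :: "'n \<Rightarrow> real"
  assumes w: "\<And>a. w a = - (\<Sum>b\<in>UNIV. \<Sum>c\<in>UNIV. G a b c * v b * v c)"
  shows "(\<Sum>a\<in>UNIV. L a * w a + (\<Sum>c\<in>UNIV. dL a c * v c) * v a)
     = (\<Sum>a\<in>UNIV. \<Sum>b\<in>UNIV. (dL a b - (\<Sum>c\<in>UNIV. G c a b * L c)) * v a * v b)"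
proof -
  have "(\<Sum>a\<in>UNIV. L a * w a + (\<Sum>c\<in>UNIV. dL a c * v c) * v a)
     = (\<Sum>a\<in>UNIV. L a * w a) + (\<Sum>a\<in>UNIV. \<Sum>b\<in>UNIV. dL a b * v a * v b)"
    unfolding sum.distrib sum_distrib_right by (simp only: mult_ac)
  also note alg_L[OF w, of L]
  also have "(\<Sum>a\<in>UNIV. \<Sum>b\<in>UNIV. (dL a b - (\<Sum>c\<in>UNIV. G c a b * L c)) * v a * v b)
     = (\<Sum>a\<in>UNIV. \<Sum>b\<in>UNIV. dL a b * v a * v b) - (\<Sum>a\<in>UNIV. \<Sum>b\<in>UNIV. (\<Sum>c\<in>UNIV. G c a b * L c) * v a * v b)"
    by (simp only: left_diff_distrib sum_subtractf)
  ultimately show ?thesis by simp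
qed

lemma quad_deriv:
  fixes T :: "real^'n \<Rightarrow> 'n \<Rightarrow> 'n \<Rightarrow> real"
  assumes q1: "(q has_vector_derivative qd t) (at t)"
    and q2: "(qd has_vector_derivative qdd t) (at t)"
    and geo: "\<forall>a. qdd t $ a + (\<Sum>b\<in>UNIV. \<Sum>c\<in>UNIV. christoffel g (q t) a b c * qd t $ b * qd t $ c) = 0"
    and Td: "\<And>a b. (\<lambda>x. T x a b) differentiable (at (q t))"
  shows "((\<lambda>s. \<Sum>a\<in>UNIV. \<Sum>b\<in>UNIV. T (q s) a b * qd s $ a * qd s $ b) has_real_derivative
           S3 (cov2 g T (q t)) (\<lambda>a. qd t $ a)) (at t)"
proof -
  have dT: "\<And>a b. ((\<lambda>s. T (q s) a b) has_real_derivative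
       (\<Sum>c\<in>UNIV. partial (\<lambda>x. T x a b) c (q t) * qd t $ c)) (at t)"
    using chain_partial[OF Td q1] .
  have dv: "\<And>a. ((\<lambda>s. qd s $ a) has_real_derivative qdd t $ a) (at t)"
    using comp_deriv[OF q2] .
  have D: "((\<lambda>s. \<Sum>a\<in>UNIV. \<Sum>b\<in>UNIV. T (q s) a b * qd s $ a * qd s $ b) has_real_derivative
     (\<Sum>a\<in>UNIV. \<Sum>b\<in>UNIV. (T (q t) a b * qd t $ a) * qdd t $ b + (T (q t) a b * qdd t $ a
        + (\<Sum>c\<in>UNIV. partial (\<lambda>x. T x a b) c (q t) * qd t $ c) * qd t $ a) * qd t $ b)) (at t)"
    by (intro DERIV_sum DERIV_mult' dT dv)
  have w: "\<And>a. qdd t $ a = - (\<Sum>b\<in>UNIV. \<Sum>c\<in>UNIV. christoffel g (q t) a b c * qd t $ b * qd t $ c)"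
    using geo by (simp add: eq_neg_iff_add_eq_0)
  have "S3 (cov2 g T (q t)) (\<lambda>a. qd t $ a) = S3 (\<lambda>a b c. partial (\<lambda>x. T x a b) c (q t)
     - (\<Sum>d\<in>UNIV. christoffel g (q t) d c a * T (q t) d b) - (\<Sum>d\<in>UNIV. christoffel g (q t) d c b * T (q t) a d)) (\<lambda>a. qd t $ a)"
    unfolding cov2_def ..
  also have "\<dots> = (\<Sum>a\<in>UNIV. \<Sum>b\<in>UNIV. (T (q t) a b * qd t $ a) * qdd t $ b + (T (q t) a b * qdd t $ a
        + (\<Sum>c\<in>UNIV. partial (\<lambda>x. T x a b) c (q t) * qd t $ c) * qd t $ a) * qd t $ b)"
    by (rule quad_alg[where w="\<lambda>a. qdd t $ a" and v="\<lambda>a. qd t $ a", symmetric]) (rule w)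
  finally show ?thesis using D by simp
qed

lemma lin_deriv:
  fixes L :: "real^'n \<Rightarrow> 'n \<Rightarrow> real"
  assumes q1: "(q has_vector_derivative qd t) (at t)"
    and q2: "(qd has_vector_derivative qdd t) (at t)"
    and geo: "\<forall>a. qdd t $ a + (\<Sum>b\<in>UNIV. \<Sum>c\<in>UNIV. christoffel g (q t) a b c * qd t $ b * qd t $ c) = 0"
    and Ld: "\<And>a. (\<lambda>x. L x a) differentiable (at (q t))"
  shows "((\<lambda>s. \<Sum>a\<in>UNIV. L (q s) a * qd s $ a) has_real_derivative
           (\<Sum>a\<in>UNIV. \<Sum>b\<in>UNIV. symcov g L (q t) a b * qd t $ a * qd t $ b)) (at t)"
proof -
  have dL: "\<And>a. ((\<lambda>s. L (q s) a) has_real_derivative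
       (\<Sum>c\<in>UNIV. partial (\<lambda>x. L x a) c (q t) * qd t $ c)) (at t)"
    using chain_partial[OF Ld q1] .
  have dv: "\<And>a. ((\<lambda>s. qd s $ a) has_real_derivative qdd t $ a) (at t)"
    using comp_deriv[OF q2] .
  have D: "((\<lambda>s. \<Sum>a\<in>UNIV. L (q s) a * qd s $ a) has_real_derivative
     (\<Sum>a\<in>UNIV. L (q t) a * qdd t $ a + (\<Sum>c\<in>UNIV. partial (\<lambda>x. L x a) c (q t) * qd t $ c) * qd t $ a)) (at t)"
    by (intro DERIV_sum DERIV_mult' dL dv)
  have w: "\<And>a. qdd t $ a = - (\<Sum>b\<in>UNIV. \<Sum>c\<in>UNIV. christoffel g (q t) a b c * qd t $ b * qd t $ c)"
    using geo by (simp add: eq_neg_iff_add_eq_0)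
  have "(\<Sum>a\<in>UNIV. \<Sum>b\<in>UNIV. symcov g L (q t) a b * qd t $ a * qd t $ b)
      = (\<Sum>a\<in>UNIV. \<Sum>b\<in>UNIV. cov1 g L (q t) a b * qd t $ a * qd t $ b)"
    by (rule symcov_contract)
  also have "\<dots> = (\<Sum>a\<in>UNIV. \<Sum>b\<in>UNIV. (partial (\<lambda>x. L x a) b (q t)
      - (\<Sum>c\<in>UNIV. christoffel g (q t) c a b * L (q t) c)) * qd t $ a * qd t $ b)"
    unfolding cov1_def ..
  also have "\<dots> = (\<Sum>a\<in>UNIV. L (q t) a * qdd t $ a + (\<Sum>c\<in>UNIV. partial (\<lambda>x. L x a) c (q t) * qd t $ c) * qd t $ a)"
    by (rule lin_alg[where w="\<lambda>a. qdd t $ a" and v="\<lambda>a. qd t $ a", symmetric]) (rule w)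
  finally show ?thesis using D by simp
qed


lemma cg_at:
  assumes "constrained_geodesic U g E0 T q qd qdd" "t \<in> T"
  shows "q t \<in> U" "(q has_vector_derivative qd t) (at t)" "(qd has_vector_derivative qdd t) (at t)"
    "\<forall>a. qdd t $ a + (\<Sum>b\<in>UNIV. \<Sum>c\<in>UNIV. christoffel g (q t) a b c * qd t $ b * qd t $ c) = 0"
    "(\<Sum>a\<in>UNIV. \<Sum>b\<in>UNIV. g (q t) a b * qd t $ a * qd t $ b) = 2 * E0"
  using assms unfolding constrained_geodesic_def by blast+

lemma ckt_deriv:
  assumes cg: "constrained_geodesic U g E0 T q qd qdd" and t: "t \<in> T"
    and ck: "is_CKT U g K u" and Kd: "\<And>a b. (\<lambda>x. K x a b) differentiable (at (q t))"
  shows "((\<lambda>s. \<Sum>a\<in>UNIV. \<Sum>b\<in>UNIV. K (q s) a b * qd s $ a * qd s $ b) has_real_derivative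
           2 * E0 * (\<Sum>a\<in>UNIV. u (q t) a * qd t $ a)) (at t)"
proof -
  note c = cg_at[OF cg t]
  have "S3 (cov2 g K (q t)) (\<lambda>a. qd t $ a) = 2 * E0 * (\<Sum>a\<in>UNIV. u (q t) a * qd t $ a)"
    apply (rule ckt_contract[where gg="g (q t)"])
    using ck c(1) unfolding is_CKT_def apply blast
    using c(5) by simp
  then show ?thesis using quad_deriv[where q=q and qd=qd and t=t and qdd=qdd and g=g and T=K, OF c(2) c(3) c(4) Kd] by simp
qed

lemma sym_deriv:
  assumes cg: "constrained_geodesic U g E0 T q qd qdd" and t: "t \<in> T"
    and L: "\<forall>a. smooth_fun U (\<lambda>q. L q a)"
  shows "((\<lambda>s. \<Sum>a\<in>UNIV. L (q s) a * qd s $ a) has_real_derivative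
           (\<Sum>a\<in>UNIV. \<Sum>b\<in>UNIV. symcov g L (q t) a b * qd t $ a * qd t $ b)) (at t)"
proof -
  note c = cg_at[OF cg t]
  have "\<And>a. (\<lambda>x. L x a) differentiable (at (q t))" using L c(1) smooth_diff by blast
  then show ?thesis using lin_deriv[where q=q and qd=qd and t=t and qdd=qdd and g=g and L=L, OF c(2) c(3) c(4)] by blast
qed

lemma symckt_deriv:
  assumes m: "metric_on U g" and cg: "constrained_geodesic U g E0 T q qd qdd" and t: "t \<in> T"
    and L: "\<forall>a. smooth_fun U (\<lambda>q. L q a)" and ck: "is_CKT U g (symcov g L) u"
  shows "((\<lambda>s. \<Sum>a\<in>UNIV. \<Sum>b\<in>UNIV. symcov g L (q s) a b * qd s $ a * qd s $ b) has_real_derivative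
           2 * E0 * (\<Sum>a\<in>UNIV. u (q t) a * qd t $ a)) (at t)"
  using ckt_deriv[OF cg t ck] symcov_diff[OF m cg_at(1)[OF cg t] L] by blast

lemma integral3:
  assumes m: "metric_on U g" and E0: "E0 \<noteq> 0" and lam: "lam \<noteq> 0"
    and L: "\<forall>a. smooth_fun U (\<lambda>q. L q a)"
    and ck: "is_CKT U g (symcov g L) (\<lambda>q a. lam\<^sup>2 / (2 * E0) * L q a)"
  shows "first_integral U g E0 (\<lambda>t q v.
          exp (lam * t) * (- (\<Sum>a\<in>UNIV. \<Sum>b\<in>UNIV. symcov g L q a b * v $ a * v $ b)
                          + lam * (\<Sum>a\<in>UNIV. L q a * v $ a)))"
  unfolding first_integral_def
proof (intro allI impI ballI, elim conjE)
  fix T q qd qdd t assume cg: "constrained_geodesic U g E0 T q qd qdd" and t: "t \<in> T"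
  define P where "P = (\<Sum>a\<in>UNIV. L (q t) a * qd t $ a)"
  define Q where "Q = (\<Sum>a\<in>UNIV. \<Sum>b\<in>UNIV. symcov g L (q t) a b * qd t $ a * qd t $ b)"
  have dQ: "((\<lambda>s. \<Sum>a\<in>UNIV. \<Sum>b\<in>UNIV. symcov g L (q s) a b * qd s $ a * qd s $ b) has_real_derivative
      lam\<^sup>2 * P) (at t)"
  proof -
    have "2 * E0 * (\<Sum>a\<in>UNIV. lam\<^sup>2 / (2 * E0) * L (q t) a * qd t $ a) = lam\<^sup>2 * P"
      unfolding P_def sum_distrib_left using E0 by (intro sum.cong refl) (simp add: field_simps)
    then show ?thesis using symckt_deriv[OF m cg t L ck] by simp
  qed
  have dP: "((\<lambda>s. \<Sum>a\<in>UNIV. L (q s) a * qd s $ a) has_real_derivative Q) (at t)"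
    unfolding Q_def by (rule sym_deriv[OF cg t L])
  have dE: "((\<lambda>s. exp (lam * s)) has_real_derivative exp (lam * t) * lam) (at t)"
    by (auto intro!: derivative_eq_intros)
  have "((\<lambda>s. exp (lam * s) * (- (\<Sum>a\<in>UNIV. \<Sum>b\<in>UNIV. symcov g L (q s) a b * qd s $ a * qd s $ b)
                          + lam * (\<Sum>a\<in>UNIV. L (q s) a * qd s $ a))) has_real_derivative
     exp (lam * t) * (- (lam\<^sup>2 * P) + lam * Q) + exp (lam * t) * lam * (- Q + lam * P)) (at t)"
    unfolding Q_def P_def
    by (intro DERIV_mult' DERIV_add DERIV_minus DERIV_cmult dE dQ[unfolded P_def] dP[unfolded Q_def])
  moreover have "exp (lam * t) * (- (lam\<^sup>2 * P) + lam * Q) + exp (lam * t) * lam * (- Q + lam * P) = 0"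
    by (simp add: algebra_simps power2_eq_square)
  ultimately show "((\<lambda>s. exp (lam * s) * (- (\<Sum>a\<in>UNIV. \<Sum>b\<in>UNIV. symcov g L (q s) a b * qd s $ a * qd s $ b)
                          + lam * (\<Sum>a\<in>UNIV. L (q s) a * qd s $ a))) has_real_derivative 0) (at t)"
    by simp
qed


lemma tele:
  fixes h :: "nat \<Rightarrow> real"
  assumes "m \<le> l"
  shows "(\<Sum>k=m..l. (if k < l then - h (Suc k) else 0) + h k) = h m"
proof (cases "l = m")
  case True then show ?thesis by simp
next
  case False
  then obtain n where l: "l = Suc n" "m \<le> n" using assms by (cases l) auto
  have "(\<Sum>k=m..n. (if k < l then - h (Suc k) else 0) + h k) = (\<Sum>k=m..n. - (h (Suc k) - h k))"
    by (intro sum.cong) (auto simp: l)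
  also have "\<dots> = - (\<Sum>k=m..n. h (Suc k) - h k)"
    by (simp only: sum_negf)
  also have "\<dots> = - (h (Suc n) - h m)"
    using sum_Suc_diff[of m n h] l(2) by simp
  finally show ?thesis using l by (simp add: sum.cl_ivl_Suc)
qed

lemma integral2:
  assumes m: "metric_on U g" and E0: "E0 \<noteq> 0"
    and Ls: "\<forall>j\<le>2*l. \<forall>a. smooth_fun U (\<lambda>q. L j q a)"
    and KT: "is_KT U g (symcov g (L (2*l)))"
    and CK: "\<forall>k<l. is_CKT U g (symcov g (L (2*k)))
          (\<lambda>q a. real ((k + 1) * (2*k + 1)) / E0 * L (2*k + 2) q a)"
  shows "first_integral U g E0 (\<lambda>t q v.
          \<Sum>k=0..l. (- (t ^ (2*k + 1) / real (2*k + 1))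
                       * (\<Sum>a\<in>UNIV. \<Sum>b\<in>UNIV. symcov g (L (2*k)) q a b * v $ a * v $ b)
                     + t ^ (2*k) * (\<Sum>a\<in>UNIV. L (2*k) q a * v $ a)))"
  unfolding first_integral_def
proof (intro allI impI ballI, elim conjE)
  fix T q qd qdd t assume cg: "constrained_geodesic U g E0 T q qd qdd" and t: "t \<in> T"
  define P where "P j = (\<Sum>a\<in>UNIV. L j (q t) a * qd t $ a)" for j
  define Q where "Q j = (\<Sum>a\<in>UNIV. \<Sum>b\<in>UNIV. symcov g (L j) (q t) a b * qd t $ a * qd t $ b)" for j
  define h where "h k = real (2*k) * t ^ (2*k - 1) * P (2*k)" for k
  have trm: "((\<lambda>s. - (s ^ (2*k + 1) / real (2*k + 1))
                       * (\<Sum>a\<in>UNIV. \<Sum>b\<in>UNIV. symcov g (L (2*k)) (q s) a b * qd s $ a * qd s $ b)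
                     + s ^ (2*k) * (\<Sum>a\<in>UNIV. L (2*k) (q s) a * qd s $ a)) has_real_derivative
        ((if k < l then - h (Suc k) else 0) + h k)) (at t)" if k: "k \<in> {0..l}" for k
  proof -
    have Lk: "\<forall>a. smooth_fun U (\<lambda>q. L (2*k) q a)" using Ls k by auto
    define Dk where "Dk = (if k < l then 2 * real ((k + 1) * (2*k + 1)) * P (2*k + 2) else 0)"
    have dQ: "((\<lambda>s. \<Sum>a\<in>UNIV. \<Sum>b\<in>UNIV. symcov g (L (2*k)) (q s) a b * qd s $ a * qd s $ b)
        has_real_derivative Dk) (at t)"
    proof (cases "k < l")
      case True
      have "2 * E0 * (\<Sum>a\<in>UNIV. real ((k + 1) * (2*k + 1)) / E0 * L (2*k + 2) (q t) a * qd t $ a) = Dk"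
        unfolding Dk_def P_def using True E0
        by (simp add: sum_distrib_left) (intro sum.cong refl, simp add: field_simps)
      then show ?thesis using symckt_deriv[OF m cg t Lk CK[rule_format, OF True]] by simp
    next
      case False
      then have "k = l" using k by simp
      then have "is_CKT U g (symcov g (L (2*k))) (\<lambda>q a. 0)" using KT unfolding is_KT_def by simp
      from symckt_deriv[OF m cg t Lk this] show ?thesis using False unfolding Dk_def by simp
    qed
    have dP: "((\<lambda>s. \<Sum>a\<in>UNIV. L (2*k) (q s) a * qd s $ a) has_real_derivative Q (2*k)) (at t)"
      unfolding Q_def by (rule sym_deriv[OF cg t Lk])
    have p1: "((\<lambda>s. s ^ (2*k + 1) / real (2*k + 1)) has_real_derivative t ^ (2*k)) (at t)"
      using DERIV_cdivide[OF DERIV_pow[of "2*k+1" t UNIV], of "real (2*k+1)"]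
      by (simp del: of_nat_add of_nat_mult)
    have p2: "((\<lambda>s. s ^ (2*k)) has_real_derivative real (2*k) * t ^ (2*k - 1)) (at t)"
      using DERIV_pow[of "2*k" t UNIV] by simp
    have "((\<lambda>s. - (s ^ (2*k + 1) / real (2*k + 1))
                       * (\<Sum>a\<in>UNIV. \<Sum>b\<in>UNIV. symcov g (L (2*k)) (q s) a b * qd s $ a * qd s $ b)
                     + s ^ (2*k) * (\<Sum>a\<in>UNIV. L (2*k) (q s) a * qd s $ a)) has_real_derivative
        (- (t ^ (2*k + 1) / real (2*k + 1)) * Dk + (- (t ^ (2*k))) * Q (2*k))
        + (t ^ (2*k) * Q (2*k) + real (2*k) * t ^ (2*k - 1) * P (2*k))) (at t)"
      unfolding Q_def P_def
      by (intro DERIV_add DERIV_mult' DERIV_minus p1 p2 dQ dP[unfolded Q_def])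
    moreover have "(- (t ^ (2*k + 1) / real (2*k + 1)) * Dk + (- (t ^ (2*k))) * Q (2*k))
        + (t ^ (2*k) * Q (2*k) + real (2*k) * t ^ (2*k - 1) * P (2*k))
        = (if k < l then - h (Suc k) else 0) + h k"
    proof (cases "k < l")
      case True
      have e: "2 * Suc k - 1 = 2*k + 1" "2 * Suc k = 2*k + 2" by simp_all
      have "t ^ (2*k + 1) / real (2*k + 1) * (2 * real ((k + 1) * (2*k + 1)) * P (2*k + 2))
          = real (2 * Suc k) * t ^ (2 * Suc k - 1) * P (2 * Suc k)"
        unfolding e by (simp add: field_simps del: of_nat_add of_nat_mult) (simp add: algebra_simps)
      then show ?thesis using True unfolding Dk_def h_def by simp
    next
      case False then show ?thesis unfolding Dk_def h_def by simp
    qed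
    ultimately show ?thesis by simp
  qed
  have "((\<lambda>s. \<Sum>k=0..l. (- (s ^ (2*k + 1) / real (2*k + 1))
                       * (\<Sum>a\<in>UNIV. \<Sum>b\<in>UNIV. symcov g (L (2*k)) (q s) a b * qd s $ a * qd s $ b)
                     + s ^ (2*k) * (\<Sum>a\<in>UNIV. L (2*k) (q s) a * qd s $ a))) has_real_derivative
        (\<Sum>k=0..l. (if k < l then - h (Suc k) else 0) + h k)) (at t)"
    by (rule DERIV_sum) (rule trm)
  moreover have "(\<Sum>k=0..l. (if k < l then - h (Suc k) else 0) + h k) = 0"
    using tele[of 0 l h] by (simp add: h_def)
  ultimately show "((\<lambda>s. \<Sum>k=0..l. (- (s ^ (2*k + 1) / real (2*k + 1))
                       * (\<Sum>a\<in>UNIV. \<Sum>b\<in>UNIV. symcov g (L (2*k)) (q s) a b * qd s $ a * qd s $ b)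
                     + s ^ (2*k) * (\<Sum>a\<in>UNIV. L (2*k) (q s) a * qd s $ a))) has_real_derivative 0) (at t)"
    by simp
qed


lemma distr1:
  fixes S :: "nat \<Rightarrow> 'n::finite \<Rightarrow> 'n \<Rightarrow> real" and C :: "'n \<Rightarrow> 'n \<Rightarrow> real"
  shows "(\<Sum>a\<in>UNIV. \<Sum>b\<in>UNIV. (- (\<Sum>k\<in>K. c k * S k a b) + C a b) * v a * v b)
    = - (\<Sum>k\<in>K. c k * (\<Sum>a\<in>UNIV. \<Sum>b\<in>UNIV. S k a b * v a * v b)) + (\<Sum>a\<in>UNIV. \<Sum>b\<in>UNIV. C a b * v a * v b)"
proof -
  have "(\<Sum>a\<in>UNIV. \<Sum>b\<in>UNIV. (- (\<Sum>k\<in>K. c k * S k a b) + C a b) * v a * v b)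
     = - (\<Sum>a\<in>UNIV. \<Sum>b\<in>UNIV. \<Sum>k\<in>K. c k * S k a b * v a * v b) + (\<Sum>a\<in>UNIV. \<Sum>b\<in>UNIV. C a b * v a * v b)"
  proof -
    have "\<And>a b. (- (\<Sum>k\<in>K. c k * S k a b) + C a b) * v a * v b
        = - (\<Sum>k\<in>K. c k * S k a b * v a * v b) + C a b * v a * v b"
      by (simp only: distrib_right mult_minus_left sum_distrib_right)
    then show ?thesis by (simp only: sum.distrib sum_negf)
  qed
  also have "(\<Sum>a\<in>UNIV. \<Sum>b\<in>UNIV. \<Sum>k\<in>K. c k * S k a b * v a * v b) = (\<Sum>a\<in>UNIV. \<Sum>k\<in>K. \<Sum>b\<in>UNIV. c k * S k a b * v a * v b)"
    by (rule sw2)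
  also have "\<dots> = (\<Sum>k\<in>K. \<Sum>a\<in>UNIV. \<Sum>b\<in>UNIV. c k * S k a b * v a * v b)"
    by (rule sum.swap)
  also have "\<dots> = (\<Sum>k\<in>K. c k * (\<Sum>a\<in>UNIV. \<Sum>b\<in>UNIV. S k a b * v a * v b))"
    by (simp only: sum_distrib_left mult.assoc)
  finally show ?thesis .
qed

lemma integral1:
  assumes m: "metric_on U g" and E0: "E0 \<noteq> 0"
    and Ls: "\<forall>j\<le>2*l. \<forall>a. smooth_fun U (\<lambda>q. L j q a)"
    and Cs: "\<forall>a b. smooth_fun U (\<lambda>q. C0 q a b)" and Gs: "smooth_fun U G"
    and KT: "l \<ge> 1 \<longrightarrow> is_KT U g (symcov g (L (2*l - 1)))"
    and CC: "is_CKT U g C0 X0"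
    and CK: "\<forall>k\<in>{1..<l}. is_CKT U g (symcov g (L (2*k - 1)))
          (\<lambda>q a. real (k * (2*k + 1)) / E0 * L (2*k + 1) q a)"
    and GG: "\<forall>q\<in>U. \<forall>a. partial G a q = - 2 * E0 * X0 q a - (if l > 0 then L 1 q a else 0)"
  shows "first_integral U g E0 (\<lambda>t q v.
          (\<Sum>a\<in>UNIV. \<Sum>b\<in>UNIV.
             (- (\<Sum>k=1..l. t ^ (2*k) / real (2*k) * symcov g (L (2*k - 1)) q a b) + C0 q a b)
             * v $ a * v $ b)
          + (\<Sum>k=1..l. t ^ (2*k - 1) * (\<Sum>a\<in>UNIV. L (2*k - 1) q a * v $ a))
          + G q)"
  unfolding first_integral_def
proof (intro allI impI ballI, elim conjE)
  fix T q qd qdd t assume cg: "constrained_geodesic U g E0 T q qd qdd" and t: "t \<in> T"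
  note c = cg_at[OF cg t]
  define P where "P j = (\<Sum>a\<in>UNIV. L j (q t) a * qd t $ a)" for j
  define Q where "Q j = (\<Sum>a\<in>UNIV. \<Sum>b\<in>UNIV. symcov g (L j) (q t) a b * qd t $ a * qd t $ b)" for j
  define XV where "XV = (\<Sum>a\<in>UNIV. X0 (q t) a * qd t $ a)"
  define h where "h k = real (2*k - 1) * t ^ (2*k - 2) * P (2*k - 1)" for k
  define Qs where "Qs k s = (\<Sum>a\<in>UNIV. \<Sum>b\<in>UNIV. symcov g (L (2*k - 1)) (q s) a b * qd s $ a * qd s $ b)" for k s
  define Ps where "Ps k s = (\<Sum>a\<in>UNIV. L (2*k - 1) (q s) a * qd s $ a)" for k s
  define QC where "QC s = (\<Sum>a\<in>UNIV. \<Sum>b\<in>UNIV. C0 (q s) a b * qd s $ a * qd s $ b)" for s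
  have eqF: "(\<Sum>a\<in>UNIV. \<Sum>b\<in>UNIV.
             (- (\<Sum>k=1..l. s ^ (2*k) / real (2*k) * symcov g (L (2*k - 1)) (q s) a b) + C0 (q s) a b)
             * qd s $ a * qd s $ b)
          + (\<Sum>k=1..l. s ^ (2*k - 1) * (\<Sum>a\<in>UNIV. L (2*k - 1) (q s) a * qd s $ a))
          + G (q s)
     = (\<Sum>k=1..l. s ^ (2*k - 1) * Ps k s - s ^ (2*k) / real (2*k) * Qs k s) + QC s + G (q s)" for s
  proof -
    have "(\<Sum>a\<in>UNIV. \<Sum>b\<in>UNIV.
             (- (\<Sum>k=1..l. s ^ (2*k) / real (2*k) * symcov g (L (2*k - 1)) (q s) a b) + C0 (q s) a b)
             * qd s $ a * qd s $ b) = - (\<Sum>k=1..l. s ^ (2*k) / real (2*k) * Qs k s) + QC s"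
      unfolding Qs_def QC_def
      by (rule distr1[where S="\<lambda>k. symcov g (L (2*k - 1)) (q s)" and v="\<lambda>a. qd s $ a"])
    then show ?thesis unfolding Ps_def sum_subtractf by simp
  qed
  have trm: "((\<lambda>s. s ^ (2*k - 1) * Ps k s - s ^ (2*k) / real (2*k) * Qs k s) has_real_derivative
        ((if k < l then - h (Suc k) else 0) + h k)) (at t)" if k: "k \<in> {1..l}" for k
  proof -
    have Lk: "\<forall>a. smooth_fun U (\<lambda>q. L (2*k - 1) q a)" using Ls k by auto
    define Dk where "Dk = (if k < l then 2 * real (k * (2*k + 1)) * P (2*k + 1) else 0)"
    have dQ: "(Qs k has_real_derivative Dk) (at t)"
    proof (cases "k < l")
      case True
      then have kk: "k \<in> {1..<l}" using k by auto
      have "2 * E0 * (\<Sum>a\<in>UNIV. real (k * (2*k + 1)) / E0 * L (2*k + 1) (q t) a * qd t $ a) = Dk"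
        unfolding Dk_def P_def using True E0
        by (simp add: sum_distrib_left) (intro sum.cong refl, simp add: field_simps)
      then show ?thesis using symckt_deriv[OF m cg t Lk CK[rule_format, OF kk]] unfolding Qs_def by simp
    next
      case False
      then have "k = l" "l \<ge> 1" using k by auto
      then have "is_CKT U g (symcov g (L (2*k - 1))) (\<lambda>q a. 0)" using KT unfolding is_KT_def by simp
      from symckt_deriv[OF m cg t Lk this] show ?thesis using False unfolding Dk_def Qs_def by simp
    qed
    have dP: "(Ps k has_real_derivative Q (2*k - 1)) (at t)"
      unfolding Q_def Ps_def by (rule sym_deriv[OF cg t Lk])
    have p1: "((\<lambda>s. s ^ (2*k) / real (2*k)) has_real_derivative t ^ (2*k - 1)) (at t)"
      using DERIV_cdivide[OF DERIV_pow[of "2*k" t UNIV], of "real (2*k)"] k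
      by (simp del: of_nat_mult)
    have p2: "((\<lambda>s. s ^ (2*k - 1)) has_real_derivative real (2*k - 1) * t ^ (2*k - 2)) (at t)"
      using DERIV_pow[of "2*k - 1" t UNIV] by (simp add: numeral_2_eq_2)
    have "((\<lambda>s. s ^ (2*k - 1) * Ps k s - s ^ (2*k) / real (2*k) * Qs k s) has_real_derivative
        (t ^ (2*k - 1) * Q (2*k - 1) + real (2*k - 1) * t ^ (2*k - 2) * P (2*k - 1))
        - (t ^ (2*k) / real (2*k) * Dk + t ^ (2*k - 1) * Qs k t)) (at t)"
      by (intro DERIV_diff DERIV_mult' p1 p2 dQ dP[unfolded Ps_def P_def]
          | simp only: Ps_def P_def)+
    moreover have "Qs k t = Q (2*k - 1)" unfolding Qs_def Q_def ..
    moreover have "(t ^ (2*k - 1) * Q (2*k - 1) + real (2*k - 1) * t ^ (2*k - 2) * P (2*k - 1))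
        - (t ^ (2*k) / real (2*k) * Dk + t ^ (2*k - 1) * Q (2*k - 1))
        = (if k < l then - h (Suc k) else 0) + h k"
    proof (cases "k < l")
      case True
      have e: "2 * Suc k - 1 = 2*k + 1" "2 * Suc k - 2 = 2*k" by simp_all
      have "t ^ (2*k) / real (2*k) * (2 * real (k * (2*k + 1)) * P (2*k + 1))
          = real (2 * Suc k - 1) * t ^ (2 * Suc k - 2) * P (2 * Suc k - 1)"
        unfolding e using k by (simp add: field_simps del: of_nat_add of_nat_mult) (simp add: algebra_simps)
      then show ?thesis using True unfolding Dk_def h_def by simp
    next
      case False then show ?thesis unfolding Dk_def h_def by simp
    qed
    ultimately show ?thesis by simp
  qed
  have dQC: "(QC has_real_derivative 2 * E0 * XV) (at t)"
  proof -
    have "\<And>a b. (\<lambda>x. C0 x a b) differentiable (at (q t))" using Cs c(1) smooth_diff by blast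
    from ckt_deriv[OF cg t CC this] show ?thesis unfolding QC_def XV_def .
  qed
  have dG: "((\<lambda>s. G (q s)) has_real_derivative - 2 * E0 * XV - (if l > 0 then P 1 else 0)) (at t)"
  proof -
    have "(\<Sum>c\<in>UNIV. partial G c (q t) * qd t $ c)
        = (\<Sum>c\<in>UNIV. (- 2 * E0 * X0 (q t) c - (if l > 0 then L 1 (q t) c else 0)) * qd t $ c)"
      using GG c(1) by simp
    also have "\<dots> = - 2 * E0 * XV - (if l > 0 then P 1 else 0)"
      unfolding XV_def P_def
      by (cases "l > 0") (simp_all add: left_diff_distrib sum_subtractf sum_distrib_left mult.assoc)
    finally have e: "(\<Sum>c\<in>UNIV. partial G c (q t) * qd t $ c) = - 2 * E0 * XV - (if l > 0 then P 1 else 0)" .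
    have "G differentiable (at (q t))" using Gs c(1) smooth_diff by blast
    from chain_partial[OF this c(2)] show ?thesis unfolding e .
  qed
  have "((\<lambda>s. (\<Sum>k=1..l. s ^ (2*k - 1) * Ps k s - s ^ (2*k) / real (2*k) * Qs k s) + QC s + G (q s))
      has_real_derivative (\<Sum>k=1..l. (if k < l then - h (Suc k) else 0) + h k)
         + 2 * E0 * XV + (- 2 * E0 * XV - (if l > 0 then P 1 else 0))) (at t)"
    by (intro DERIV_add DERIV_sum dQC dG trm) simp
  moreover have "(\<Sum>k=1..l. (if k < l then - h (Suc k) else 0) + h k) = (if l > 0 then P 1 else 0)"
  proof (cases "l > 0")
    case True
    then show ?thesis using tele[of 1 l h] by (simp add: h_def)
  next
    case False then show ?thesis by simp
  qed
  ultimately have "((\<lambda>s. (\<Sum>k=1..l. s ^ (2*k - 1) * Ps k s - s ^ (2*k) / real (2*k) * Qs k s) + QC s + G (q s))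
      has_real_derivative 0) (at t)" by simp
  then show "((\<lambda>s. (\<Sum>a\<in>UNIV. \<Sum>b\<in>UNIV.
             (- (\<Sum>k=1..l. s ^ (2*k) / real (2*k) * symcov g (L (2*k - 1)) (q s) a b) + C0 (q s) a b)
             * qd s $ a * qd s $ b)
          + (\<Sum>k=1..l. s ^ (2*k - 1) * (\<Sum>a\<in>UNIV. L (2*k - 1) (q s) a * qd s $ a))
          + G (q s)) has_real_derivative 0) (at t)"
    unfolding eqF .
qed


theorem proposition2:
  fixes U :: "(real^'n) set" and g :: "real^'n \<Rightarrow> 'n \<Rightarrow> 'n \<Rightarrow> real" and E0 :: real
  assumes metric: "metric_on U g" and E0: "E0 \<noteq> 0"
  shows
   "(\<forall>(l::nat) (L::nat \<Rightarrow> real^'n \<Rightarrow> 'n \<Rightarrow> real) C0 X0 G.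
      (\<forall>j\<le>2*l. \<forall>a. smooth_fun U (\<lambda>q. L j q a)) \<and>
      (\<forall>a b. smooth_fun U (\<lambda>q. C0 q a b)) \<and> (\<forall>a. smooth_fun U (\<lambda>q. X0 q a)) \<and> smooth_fun U G \<and>
      (l \<ge> 1 \<longrightarrow> is_KT U g (symcov g (L (2*l - 1)))) \<and>
      is_CKT U g C0 X0 \<and>
      (\<forall>k\<in>{1..<l}. is_CKT U g (symcov g (L (2*k - 1)))
          (\<lambda>q a. real (k * (2*k + 1)) / E0 * L (2*k + 1) q a)) \<and>
      (\<forall>q\<in>U. \<forall>a. partial G a q = - 2 * E0 * X0 q a - (if l > 0 then L 1 q a else 0))
    \<longrightarrow> first_integral U g E0 (\<lambda>t q v.
          (\<Sum>a\<in>UNIV. \<Sum>b\<in>UNIV.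
             (- (\<Sum>k=1..l. t ^ (2*k) / real (2*k) * symcov g (L (2*k - 1)) q a b) + C0 q a b)
             * v $ a * v $ b)
          + (\<Sum>k=1..l. t ^ (2*k - 1) * (\<Sum>a\<in>UNIV. L (2*k - 1) q a * v $ a))
          + G q))
  \<and>
   (\<forall>(l::nat) (L::nat \<Rightarrow> real^'n \<Rightarrow> 'n \<Rightarrow> real).
      (\<forall>j\<le>2*l. \<forall>a. smooth_fun U (\<lambda>q. L j q a)) \<and>
      is_KT U g (symcov g (L (2*l))) \<and>
      (\<forall>k<l. is_CKT U g (symcov g (L (2*k)))
          (\<lambda>q a. real ((k + 1) * (2*k + 1)) / E0 * L (2*k + 2) q a))
    \<longrightarrow> first_integral U g E0 (\<lambda>t q v.
          \<Sum>k=0..l. (- (t ^ (2*k + 1) / real (2*k + 1))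
                       * (\<Sum>a\<in>UNIV. \<Sum>b\<in>UNIV. symcov g (L (2*k)) q a b * v $ a * v $ b)
                     + t ^ (2*k) * (\<Sum>a\<in>UNIV. L (2*k) q a * v $ a))))
  \<and>
   (\<forall>(lam::real) (L::real^'n \<Rightarrow> 'n \<Rightarrow> real).
      lam \<noteq> 0 \<and> (\<forall>a. smooth_fun U (\<lambda>q. L q a)) \<and>
      is_CKT U g (symcov g L) (\<lambda>q a. lam\<^sup>2 / (2 * E0) * L q a)
    \<longrightarrow> first_integral U g E0 (\<lambda>t q v.
          exp (lam * t) * (- (\<Sum>a\<in>UNIV. \<Sum>b\<in>UNIV. symcov g L q a b * v $ a * v $ b)
                          + lam * (\<Sum>a\<in>UNIV. L q a * v $ a))))"
    apply (intro conjI allI impI)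
  subgoal by (elim conjE, rule integral1[OF metric E0], assumption+)
  subgoal by (elim conjE, rule integral2[OF metric E0], assumption+)
  subgoal by (elim conjE, rule integral3[OF metric E0], assumption+)
  done

end
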